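(* Let $A,B,C$ be logically independent events. Given $(x,y)\in[0,1]^2$, the assessment $P(C|AB)=x$, $P(B|A)=y$, $P(C|A)=z$ is coherent if and only if \[ xy\le z\le xy+1-y . \] Consequently, if $0\le\alpha_i\le\beta_i\le1$ ($i=1,2$), the set of values $z$ for which there exist $x\in[\alpha_1,\beta_1]$, $y\in[\alpha_2,\beta_2]$ making $(x,y,z)$ a coherent assessment on $(C|AB,B|A,C|A)$ is exactly $[\alpha_3,\beta_3]$ with $\alpha_3=\alpha_1\alpha_2$ and $\beta_3=\beta_1\alpha_2+1-\alpha_2$.
   Context: Events are elements of a Boolean algebra; $AB$ denotes conjunction, $A\vee B$ disjunction, $A^c$ negation. $A,B,C$ are logically independent if all eight conjunctions $A^{*}B^{*}C^{*}$ (each $X^{*}\in\{X,X^c\}$) are possible (nonempty). A conditional event $E|H$ requires $H\neq\emptyset$; conditional probabilities are treated as primitive (no requirement that $P(H)>0$). Coherence (de Finetti): an assessment $(p_1,\dots,p_n)$ on conditional events $E_1|H_1,\dots,E_n|H_n$ is coherent if for every nonempty $J\subseteq\{1,\dots,n\}$ and every real numbers $s_j$ ($j\in J$), the random gain $G=\sum_{j\in J}s_j\,I_{H_j}(I_{E_j}-p_j)$ (with $I$ denoting indicator functions) satisfies $\max G\ge 0$, where the maximum is taken over the possible worlds (atoms) contained in $\bigvee_{j\in J}H_j$. *)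

theory Defs
  imports Main "HOL-Library.Indicator_Function"
begin

text \<open>Events are subsets of a space of possible worlds of type 'w (a Boolean algebra of sets).
  A conditional assessment is a list of triples (E, H, p) meaning P(E|H) = p.\<close>

definition logically_independent3 :: "'w set \<Rightarrow> 'w set \<Rightarrow> 'w set \<Rightarrow> bool" where
  "logically_independent3 A B C \<longleftrightarrow>
     (\<forall>A' \<in> {A, - A}. \<forall>B' \<in> {B, - B}. \<forall>C' \<in> {C, - C}. A' \<inter> B' \<inter> C' \<noteq> {})"

definition cond_gain :: "('w set \<times> 'w set \<times> real) list \<Rightarrow> nat set \<Rightarrow> (nat \<Rightarrow> real) \<Rightarrow> 'w \<Rightarrow> real" where
  "cond_gain L J s \<omega> =
     (\<Sum>j\<in>J. s j * indicator (fst (snd (L ! j))) \<omega> *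
               (indicator (fst (L ! j)) \<omega> - snd (snd (L ! j))))"

text \<open>de Finetti coherence: for every nonempty subfamily J and all stakes s, the random gain
  attains a nonnegative value at some possible world in the disjunction of the conditioning events
  (the gain takes finitely many values, so this is "max G \<ge> 0").\<close>
definition coherent :: "('w set \<times> 'w set \<times> real) list \<Rightarrow> bool" where
  "coherent L \<longleftrightarrow>
     (\<forall>j < length L. fst (snd (L ! j)) \<noteq> {}) \<and>
     (\<forall>J. J \<subseteq> {..<length L} \<longrightarrow> J \<noteq> {} \<longrightarrow>
        (\<forall>s :: nat \<Rightarrow> real. \<exists>\<omega> \<in> (\<Union>j\<in>J. fst (snd (L ! j))). cond_gain L J s \<omega> \<ge> 0))"

end

theory Submission
  imports Defs
begin

lemma some_nonneg:
  fixes a b c d g1 g2 g3 g4 :: real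
  assumes "a \<ge> 0" "b \<ge> 0" "c \<ge> 0" "d \<ge> 0" "a + b + c + d = 1"
    and "a*g1 + b*g2 + c*g3 + d*g4 = 0"
  shows "g1 \<ge> 0 \<or> g2 \<ge> 0 \<or> g3 \<ge> 0 \<or> g4 \<ge> 0"
proof (rule ccontr)
  assume "\<not> ?thesis"
  hence n: "g1 < 0" "g2 < 0" "g3 < 0" "g4 < 0" by auto
  define m where "m = max g1 (max g2 (max g3 g4))"
  have m: "m < 0" "g1 \<le> m" "g2 \<le> m" "g3 \<le> m" "g4 \<le> m" using n by (auto simp: m_def)
  have "a*g1 \<le> a*m" by (rule mult_left_mono) (use m assms in auto)
  moreover have "b*g2 \<le> b*m" by (rule mult_left_mono) (use m assms in auto)
  moreover have "c*g3 \<le> c*m" by (rule mult_left_mono) (use m assms in auto)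
  moreover have "d*g4 \<le> d*m" by (rule mult_left_mono) (use m assms in auto)
  moreover have "a*m + b*m + c*m + d*m = m" using assms(5)
    by (metis distrib_right mult_1)
  ultimately show False using assms(6) m(1) by linarith
qed

lemma coh_iff:
  fixes A B C :: "'w set" and x y z :: real
  assumes li: "logically_independent3 A B C" and x: "x \<in> {0..1}" and y: "y \<in> {0..1}"
  shows "coherent [(C, A \<inter> B, x), (B, A, y), (C, A, z)] \<longleftrightarrow>
             x * y \<le> z \<and> z \<le> x * y + 1 - y"
proof -
  let ?L = "[(C, A \<inter> B, x), (B, A, y), (C, A, z)]"
  obtain w1 w2 w3 w4 where w1: "w1 \<in> A" "w1 \<in> B" "w1 \<in> C"
    and w2: "w2 \<in> A" "w2 \<in> B" "w2 \<notin> C"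
    and w3: "w3 \<in> A" "w3 \<notin> B" "w3 \<in> C"
    and w4: "w4 \<in> A" "w4 \<notin> B" "w4 \<notin> C"
  proof -
    have ne: "A \<inter> B \<inter> C \<noteq> {}" "A \<inter> B \<inter> - C \<noteq> {}"
      "A \<inter> - B \<inter> C \<noteq> {}" "A \<inter> - B \<inter> - C \<noteq> {}"
      using li unfolding logically_independent3_def by simp_all
    assume r: "\<And>w1 w2 w3 w4. \<lbrakk>w1 \<in> A; w1 \<in> B; w1 \<in> C; w2 \<in> A; w2 \<in> B; w2 \<notin> C;
      w3 \<in> A; w3 \<notin> B; w3 \<in> C; w4 \<in> A; w4 \<notin> B; w4 \<notin> C\<rbrakk> \<Longrightarrow> thesis"
    obtain w1 where "w1 \<in> A \<inter> B \<inter> C" using ne(1) by (metis ex_in_conv)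
    moreover obtain w2 where "w2 \<in> A \<inter> B \<inter> - C" using ne(2) by (metis ex_in_conv)
    moreover obtain w3 where "w3 \<in> A \<inter> - B \<inter> C" using ne(3) by (metis ex_in_conv)
    moreover obtain w4 where "w4 \<in> A \<inter> - B \<inter> - C" using ne(4) by (metis ex_in_conv)
    ultimately show thesis by (intro r[of w1 w2 w3 w4]) auto
  qed
  show ?thesis
  proof
    assume coh: "coherent ?L"
    have J: "{0,1,2::nat} \<subseteq> {..<length ?L}" "{0,1,2::nat} \<noteq> {}" by auto
    have G: "cond_gain ?L {0,1,2} s \<omega> =
       s 0 * indicator (A \<inter> B) \<omega> * (indicator C \<omega> - x)
     + s 1 * indicator A \<omega> * (indicator B \<omega> - y)
     + s 2 * indicator A \<omega> * (indicator C \<omega> - z)" for s \<omega>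
      by (simp add: cond_gain_def)
    show "x * y \<le> z \<and> z \<le> x * y + 1 - y"
    proof (rule ccontr)
      assume "\<not> (x * y \<le> z \<and> z \<le> x * y + 1 - y)"
      hence "z < x*y \<or> z > x*y + 1 - y" by auto
      then show False
      proof
        assume zl: "z < x*y"
        let ?s = "(\<lambda>j::nat. if j = 0 then 1 else if j = 1 then x else -1)"
        obtain \<omega> where om: "\<omega> \<in> (\<Union>j\<in>{0,1,2}. fst (snd (?L ! j)))"
          and g: "cond_gain ?L {0,1,2} ?s \<omega> \<ge> 0"
          using coh J unfolding coherent_def by blast
        have "\<omega> \<in> A" using om by auto
        thus False using g zl unfolding G
          by (cases "\<omega> \<in> B"; cases "\<omega> \<in> C"; simp add: algebra_simps)
      next
        assume zg: "z > x*y + 1 - y"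
        let ?s = "(\<lambda>j::nat. if j = 0 then -1 else if j = 1 then 1 - x else 1)"
        obtain \<omega> where om: "\<omega> \<in> (\<Union>j\<in>{0,1,2}. fst (snd (?L ! j)))"
          and g: "cond_gain ?L {0,1,2} ?s \<omega> \<ge> 0"
          using coh J unfolding coherent_def by blast
        have "\<omega> \<in> A" using om by auto
        thus False using g zg y unfolding G
          by (cases "\<omega> \<in> B"; cases "\<omega> \<in> C"; simp add: algebra_simps)
      qed
    qed
  next
    assume z: "x * y \<le> z \<and> z \<le> x * y + 1 - y"
    define a where "a = x*y"
    define b where "b = y - x*y"
    define c where "c = z - x*y"
    define d where "d = 1 - y - z + x*y"
    have xy: "x*y \<le> y" using x y by (simp add: mult_left_le_one_le)
    have nn: "a \<ge> 0" "b \<ge> 0" "c \<ge> 0" "d \<ge> 0" "a+b+c+d = 1"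
      using x y z xy by (auto simp: a_def b_def c_def d_def)
    let ?f = "\<lambda>s j \<omega>. s j * indicator (fst (snd (?L ! j))) \<omega> *
               (indicator (fst (?L ! j)) \<omega> - snd (snd (?L ! j)))"
    have fz: "a * ?f s j w1 + b * ?f s j w2 + c * ?f s j w3 + d * ?f s j w4 = (0::real)"
      if "j < 3" for s j
    proof -
      have "j = 0 \<or> j = 1 \<or> j = 2" using that by auto
      thus ?thesis using w1 w2 w3 w4
        by (elim disjE) (simp_all add: a_def b_def c_def d_def algebra_simps)
    qed
    show "coherent ?L"
      unfolding coherent_def
    proof (intro conjI allI impI)
      fix j assume "j < length ?L"
      hence "j = 0 \<or> j = 1 \<or> j = 2" by auto
      thus "fst (snd (?L ! j)) \<noteq> {}" using w1 by auto
    next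
      fix J s assume Js: "J \<subseteq> {..<length ?L}" and Jne: "J \<noteq> {}"
      show "\<exists>\<omega>\<in>\<Union>j\<in>J. fst (snd (?L ! j)). 0 \<le> cond_gain ?L J s \<omega>"
      proof (cases "J = {0}")
        case True
        show ?thesis
        proof (cases "s 0 \<ge> 0")
          case True
          thus ?thesis using \<open>J = {0}\<close> w1 x
            by (intro bexI[of _ w1]) (auto simp: cond_gain_def)
        next
          case False
          thus ?thesis using \<open>J = {0}\<close> w2 x
            by (intro bexI[of _ w2]) (auto simp: cond_gain_def mult_nonpos_nonneg)
        qed
      next
        case False
        have "\<exists>j\<in>J. j = 1 \<or> j = 2"
        proof (rule ccontr)
          assume "\<not> ?thesis"
          have "J \<subseteq> {0}"
          proof
            fix i assume "i \<in> J"
            hence "i < 3" "i \<noteq> 1" "i \<noteq> 2" using Js \<open>\<not> (\<exists>j\<in>J. j = 1 \<or> j = 2)\<close> by auto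
            thus "i \<in> {0}" by auto
          qed
          thus False using Jne False by blast
        qed
        then obtain j where j: "j \<in> J" "j = 1 \<or> j = 2" by blast
        have U: "A \<subseteq> (\<Union>j\<in>J. fst (snd (?L ! j)))" using j by auto
        have fin: "finite J" using Js finite_subset by blast
        have "a * cond_gain ?L J s w1 + b * cond_gain ?L J s w2 + c * cond_gain ?L J s w3
              + d * cond_gain ?L J s w4
            = (\<Sum>j\<in>J. a * ?f s j w1 + b * ?f s j w2 + c * ?f s j w3 + d * ?f s j w4)"
          unfolding cond_gain_def by (simp add: sum.distrib sum_distrib_left)
        also have "\<dots> = 0"
        proof (intro sum.neutral ballI)
          fix j assume "j \<in> J"
          hence "j < 3" using Js by auto
          thus "a * ?f s j w1 + b * ?f s j w2 + c * ?f s j w3 + d * ?f s j w4 = 0" by (rule fz)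
        qed
        finally have "cond_gain ?L J s w1 \<ge> 0 \<or> cond_gain ?L J s w2 \<ge> 0
           \<or> cond_gain ?L J s w3 \<ge> 0 \<or> cond_gain ?L J s w4 \<ge> 0"
          using some_nonneg[OF nn] by blast
        thus ?thesis using U w1 w2 w3 w4 by blast
      qed
    qed
  qed
qed

theorem mainTheorem3:
  fixes A B C :: "'w set"
  assumes "logically_independent3 A B C"
  shows "(\<forall>x y z :: real. x \<in> {0..1} \<longrightarrow> y \<in> {0..1} \<longrightarrow>
            (coherent [(C, A \<inter> B, x), (B, A, y), (C, A, z)] \<longleftrightarrow>
             x * y \<le> z \<and> z \<le> x * y + 1 - y))
       \<and> (\<forall>\<alpha>1 \<beta>1 \<alpha>2 \<beta>2 :: real.
            0 \<le> \<alpha>1 \<longrightarrow> \<alpha>1 \<le> \<beta>1 \<longrightarrow> \<beta>1 \<le> 1 \<longrightarrow>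
            0 \<le> \<alpha>2 \<longrightarrow> \<alpha>2 \<le> \<beta>2 \<longrightarrow> \<beta>2 \<le> 1 \<longrightarrow>
            {z. \<exists>x \<in> {\<alpha>1..\<beta>1}. \<exists>y \<in> {\<alpha>2..\<beta>2}.
                  coherent [(C, A \<inter> B, x), (B, A, y), (C, A, z)]}
            = {\<alpha>1 * \<alpha>2 .. \<beta>1 * \<alpha>2 + 1 - \<alpha>2})"
proof (intro conjI allI impI)
  fix x y z :: real assume "x \<in> {0..1}" "y \<in> {0..1}"
  thus "coherent [(C, A \<inter> B, x), (B, A, y), (C, A, z)] \<longleftrightarrow>
             x * y \<le> z \<and> z \<le> x * y + 1 - y" by (rule coh_iff[OF assms])
next
  fix a1 b1 a2 b2 :: real
  assume h: "0 \<le> a1" "a1 \<le> b1" "b1 \<le> 1" "0 \<le> a2" "a2 \<le> b2" "b2 \<le> 1"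
  show "{z. \<exists>x \<in> {a1..b1}. \<exists>y \<in> {a2..b2}.
                  coherent [(C, A \<inter> B, x), (B, A, y), (C, A, z)]}
            = {a1 * a2 .. b1 * a2 + 1 - a2}"
  proof (intro set_eqI iffI)
    fix z assume "z \<in> {z. \<exists>x \<in> {a1..b1}. \<exists>y \<in> {a2..b2}.
                  coherent [(C, A \<inter> B, x), (B, A, y), (C, A, z)]}"
    then obtain x y where xy: "x \<in> {a1..b1}" "y \<in> {a2..b2}"
      and c: "coherent [(C, A \<inter> B, x), (B, A, y), (C, A, z)]" by blast
    have x01: "x \<in> {0..1}" "y \<in> {0..1}" using xy h by auto
    have zz: "x * y \<le> z" "z \<le> x * y + 1 - y" using coh_iff[OF assms x01] c by auto
    have xb: "a1 \<le> x" "x \<le> b1" "a2 \<le> y" "y \<le> b2" using xy by auto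
    have "a1 * a2 \<le> x * y" using xb h by (intro mult_mono) linarith+
    moreover have "x * y + 1 - y \<le> b1 * a2 + 1 - a2"
    proof -
      have "a2 * (1 - b1) \<le> y * (1 - x)" using xb h by (intro mult_mono) linarith+
      thus ?thesis by (simp add: algebra_simps)
    qed
    ultimately show "z \<in> {a1 * a2 .. b1 * a2 + 1 - a2}" using zz by auto
  next
    fix z assume z: "z \<in> {a1 * a2 .. b1 * a2 + 1 - a2}"
    have y01: "a2 \<in> {0..1}" "a2 \<in> {a2..b2}" using h by auto
    show "z \<in> {z. \<exists>x \<in> {a1..b1}. \<exists>y \<in> {a2..b2}.
                  coherent [(C, A \<inter> B, x), (B, A, y), (C, A, z)]}"
    proof (cases "z \<le> a1 * a2 + 1 - a2")
      case True
      have a1: "a1 \<in> {0..1}" "a1 \<in> {a1..b1}" using h by auto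
      have "a1 * a2 \<le> z \<and> z \<le> a1 * a2 + 1 - a2" using True z by simp
      hence c: "coherent [(C, A \<inter> B, a1), (B, A, a2), (C, A, z)]"
        using coh_iff[OF assms a1(1) y01(1), of z] by simp
      show ?thesis using c a1(2) y01(2) by blast
    next
      case False
      have a2p: "a2 > 0"
      proof (rule ccontr)
        assume "\<not> a2 > 0" hence "a2 = 0" using h by auto
        thus False using False z by simp
      qed
      define x where "x = (z - 1 + a2) / a2"
      have xe: "x * a2 = z - 1 + a2" using a2p by (simp add: x_def)
      have "a1 * a2 \<le> x * a2" using False xe h by linarith
      hence "a1 \<le> x" using a2p by (simp only: mult_le_cancel_right_pos)
      moreover have "x * a2 \<le> b1 * a2" using z xe by simp
      hence "x \<le> b1" using a2p by (simp only: mult_le_cancel_right_pos)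
      ultimately have xi: "x \<in> {a1..b1}" "x \<in> {0..1}" using h by auto
      have "x * a2 \<le> z \<and> z \<le> x * a2 + 1 - a2" using xe h by linarith
      hence c: "coherent [(C, A \<inter> B, x), (B, A, a2), (C, A, z)]"
        using coh_iff[OF assms xi(2) y01(1), of z] by simp
      show ?thesis using c xi(1) y01(2) by blast
    qed
  qed
qed

end
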